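(* Let $(\mathfrak{g},\langle\cdot,\cdot\rangle)$ be a pseudo-Euclidean unimodular Lie algebra admitting a derivation with nonzero trace. Then $(\mathfrak{g},\langle\cdot,\cdot\rangle)$ is Einstein if and only if it is Ricci-flat.
   Context: A pseudo-Euclidean Lie algebra is a finite-dimensional real Lie algebra $\mathfrak{g}$ with a nondegenerate symmetric bilinear form $\langle\cdot,\cdot\rangle$ (equivalently, a left-invariant pseudo-Riemannian metric on a corresponding Lie group). Unimodular means $\mathrm{tr}(\mathrm{ad}_u)=0$ for all $u\in\mathfrak{g}$. The Levi-Civita product $\mathrm{L}$ is defined by $2\langle \mathrm{L}_uv,w\rangle=\langle[u,v],w\rangle+\langle[w,u],v\rangle+\langle[w,v],u\rangle$; the curvature is $K(u,v)=\mathrm{L}_{[u,v]}-[\mathrm{L}_u,\mathrm{L}_v]$; the Ricci curvature is $\mathrm{ric}(u,v)=\mathrm{tr}(w\mapsto K(u,w)v)$ and the Ricci operator $\mathrm{Ric}$ is defined by $\langle\mathrm{Ric}(u),v\rangle=\mathrm{ric}(u,v)$. The algebra is Einstein if $\mathrm{Ric}=\lambda\,\mathrm{Id}_{\mathfrak{g}}$ for some $\lambda\in\mathbb{R}$, and Ricci-flat if $\mathrm{Ric}=0$. *)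

theory Defs
  imports "HOL-Analysis.Analysis"
begin

text \<open>A finite-dimensional real Lie algebra is modelled as a Lie bracket on a
type of class euclidean_space (any finite-dimensional real vector space).\<close>

definition lie_algebra :: "('a::euclidean_space \<Rightarrow> 'a \<Rightarrow> 'a) \<Rightarrow> bool" where
  "lie_algebra br \<longleftrightarrow> bilinear br \<and> (\<forall>x. br x x = 0) \<and>
     (\<forall>x y z. br x (br y z) + br y (br z x) + br z (br x y) = 0)"

definition pseudo_metric :: "('a::euclidean_space \<Rightarrow> 'a \<Rightarrow> real) \<Rightarrow> bool" where
  "pseudo_metric B \<longleftrightarrow> bilinear B \<and> (\<forall>x y. B x y = B y x) \<and>
     (\<forall>x. (\<forall>y. B x y = 0) \<longrightarrow> x = 0)"

definition ltrace :: "('a::euclidean_space \<Rightarrow> 'a) \<Rightarrow> real" where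
  "ltrace f = (\<Sum>b\<in>Basis. inner (f b) b)"

definition unimodular :: "('a::euclidean_space \<Rightarrow> 'a \<Rightarrow> 'a) \<Rightarrow> bool" where
  "unimodular br \<longleftrightarrow> (\<forall>u. ltrace (br u) = 0)"

definition lie_derivation :: "('a::euclidean_space \<Rightarrow> 'a \<Rightarrow> 'a) \<Rightarrow> ('a \<Rightarrow> 'a) \<Rightarrow> bool" where
  "lie_derivation br D \<longleftrightarrow> linear D \<and> (\<forall>x y. D (br x y) = br (D x) y + br x (D y))"

definition levi_civita :: "('a::euclidean_space \<Rightarrow> 'a \<Rightarrow> 'a) \<Rightarrow> ('a \<Rightarrow> 'a \<Rightarrow> real) \<Rightarrow> 'a \<Rightarrow> 'a \<Rightarrow> 'a" where
  "levi_civita br B u v = (THE x. \<forall>w. 2 * B x w = B (br u v) w + B (br w u) v + B (br w v) u)"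

definition curvature :: "('a::euclidean_space \<Rightarrow> 'a \<Rightarrow> 'a) \<Rightarrow> ('a \<Rightarrow> 'a \<Rightarrow> real) \<Rightarrow> 'a \<Rightarrow> 'a \<Rightarrow> 'a \<Rightarrow> 'a" where
  "curvature br B u v w = levi_civita br B (br u v) w
     - (levi_civita br B u (levi_civita br B v w) - levi_civita br B v (levi_civita br B u w))"

definition ricci :: "('a::euclidean_space \<Rightarrow> 'a \<Rightarrow> 'a) \<Rightarrow> ('a \<Rightarrow> 'a \<Rightarrow> real) \<Rightarrow> 'a \<Rightarrow> 'a \<Rightarrow> real" where
  "ricci br B u v = ltrace (\<lambda>w. curvature br B u w v)"

definition ricci_op :: "('a::euclidean_space \<Rightarrow> 'a \<Rightarrow> 'a) \<Rightarrow> ('a \<Rightarrow> 'a \<Rightarrow> real) \<Rightarrow> 'a \<Rightarrow> 'a" where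
  "ricci_op br B u = (THE x. \<forall>v. B x v = ricci br B u v)"

definition einstein :: "('a::euclidean_space \<Rightarrow> 'a \<Rightarrow> 'a) \<Rightarrow> ('a \<Rightarrow> 'a \<Rightarrow> real) \<Rightarrow> bool" where
  "einstein br B \<longleftrightarrow> (\<exists>c::real. ricci_op br B = (\<lambda>u. c *\<^sub>R u))"

definition ricci_flat :: "('a::euclidean_space \<Rightarrow> 'a \<Rightarrow> 'a) \<Rightarrow> ('a \<Rightarrow> 'a \<Rightarrow> real) \<Rightarrow> bool" where
  "ricci_flat br B \<longleftrightarrow> ricci_op br B = (\<lambda>u. 0)"

end

theory Submission
  imports Defs
begin


locale plie =
  fixes br :: "'a::euclidean_space \<Rightarrow> 'a \<Rightarrow> 'a" and B :: "'a \<Rightarrow> 'a \<Rightarrow> real"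
  assumes bl: "bilinear br" and alt: "\<And>x. br x x = 0"
    and Bbl: "bilinear B" and Bsym: "\<And>x y. B x y = B y x"
    and Bnd: "\<And>x. (\<forall>y. B x y = 0) \<Longrightarrow> x = 0"
begin

lemma brlin1: "linear (br u)" using bl by (simp add: bilinear_def)
lemma brlin2: "linear (\<lambda>x. br x v)" using bl by (simp add: bilinear_def)
lemma Blin1: "linear (B u)" using Bbl by (simp add: bilinear_def)
lemma Blin2: "linear (\<lambda>x. B x v)" using Bbl by (simp add: bilinear_def)

lemmas brs = bilinear_ladd[OF bl] bilinear_radd[OF bl] bilinear_lmul[OF bl] bilinear_rmul[OF bl]
  bilinear_lneg[OF bl] bilinear_rneg[OF bl] bilinear_lsub[OF bl] bilinear_rsub[OF bl]
  bilinear_lzero[OF bl] bilinear_rzero[OF bl]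
  linear_sum[OF brlin1] linear_sum[OF brlin2]
lemma Bsc: "B (c *\<^sub>R x) y = c * B x y" "B x (c *\<^sub>R y) = c * B x y"
  using bilinear_lmul[OF Bbl] bilinear_rmul[OF Bbl] by auto
lemmas Bs = bilinear_ladd[OF Bbl] bilinear_radd[OF Bbl] Bsc
  bilinear_lneg[OF Bbl] bilinear_rneg[OF Bbl] bilinear_lsub[OF Bbl] bilinear_rsub[OF Bbl]
  bilinear_lzero[OF Bbl] bilinear_rzero[OF Bbl]
  linear_sum[OF Blin1] linear_sum[OF Blin2]

lemma anti: "br y x = - br x y"
proof -
  have "br (x+y) (x+y) = br x x + br x y + (br y x + br y y)"
    by (simp add: brs algebra_simps)
  then have "br x y + br y x = 0" by (simp add: alt)
  then show ?thesis by (simp add: eq_neg_iff_add_eq_0 add.commute)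
qed

lemma B_ext: "(\<And>z. B p z = B q z) \<Longrightarrow> p = q"
proof -
  assume h: "\<And>z. B p z = B q z"
  have "\<forall>z. B (p - q) z = 0" by (simp add: Bs h)
  then show "p = q" using Bnd by fastforce
qed

definition Gop :: "'a \<Rightarrow> 'a" where "Gop x = (\<Sum>b\<in>Basis. B x b *\<^sub>R b)"

lemma inner_Gop: "inner (Gop x) y = B x y"
proof -
  have "B x y = B x (\<Sum>b\<in>Basis. inner y b *\<^sub>R b)" by (simp add: euclidean_representation)
  also have "\<dots> = (\<Sum>b\<in>Basis. inner y b * B x b)" by (simp add: Bs)
  also have "\<dots> = inner (Gop x) y" unfolding Gop_def inner_sum_left
    by (rule sum.cong) (simp_all add: inner_commute)
  finally show ?thesis by simp
qed

lemma Gop_lin: "linear Gop"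
  by (rule linearI) (simp_all add: Gop_def Bs scaleR_add_left sum.distrib scaleR_sum_right)

lemma Gop_inj: "inj Gop"
proof (rule injI)
  fix x y assume "Gop x = Gop y"
  then have "\<And>z. B x z = B y z" by (metis inner_Gop)
  then show "x = y" by (rule B_ext)
qed

definition Ginv :: "'a \<Rightarrow> 'a" where
  "Ginv = (SOME g. linear g \<and> (\<forall>x. g (Gop x) = x) \<and> (\<forall>x. Gop (g x) = x))"

lemma Ginv: "linear Ginv \<and> (\<forall>x. Ginv (Gop x) = x) \<and> (\<forall>x. Gop (Ginv x) = x)"
proof -
  have "\<exists>g. linear g \<and> (\<forall>x. g (Gop x) = x) \<and> (\<forall>x. Gop (g x) = x)"
    using linear_injective_isomorphism[OF Gop_lin Gop_inj] by blast
  then show ?thesis unfolding Ginv_def by (rule someI_ex)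
qed

lemma Ginv_lin: "linear Ginv" using Ginv by blast

lemma B_Ginv: "B (Ginv z) y = inner z y"
  by (metis Ginv inner_Gop)

abbreviation fd where "fd \<equiv> Ginv"

lemma B_fd: "B (fd b) x = inner b x" by (rule B_Ginv)
lemma B_fd2: "B x (fd b) = inner b x" by (metis Bsym B_Ginv)

lemma eurep2: "(\<Sum>b\<in>Basis. inner b x *\<^sub>R b) = x"
proof -
  have "(\<Sum>b\<in>Basis. inner b x *\<^sub>R b) = (\<Sum>b\<in>Basis. inner x b *\<^sub>R b)"
    by (rule sum.cong) (simp_all add: inner_commute)
  then show ?thesis by (simp add: euclidean_representation)
qed

lemma expand: "(\<Sum>b\<in>Basis. B x (fd b) *\<^sub>R b) = x"
  by (simp add: B_fd2 eurep2)

lemma ltrace_dual: "ltrace X = (\<Sum>b\<in>Basis. B (X b) (fd b))"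
  by (simp add: ltrace_def B_fd2 inner_commute)

definition rz :: "('a \<Rightarrow> real) \<Rightarrow> 'a" where "rz \<phi> = Ginv (\<Sum>b\<in>Basis. \<phi> b *\<^sub>R b)"

lemma B_rz: assumes "linear \<phi>" shows "B (rz \<phi>) y = \<phi> y"
proof -
  have "\<phi> y = \<phi> (\<Sum>b\<in>Basis. inner y b *\<^sub>R b)" by (simp add: euclidean_representation)
  also have "\<dots> = (\<Sum>b\<in>Basis. inner y b * \<phi> b)"
    by (simp add: linear_sum[OF assms] linear_scale[OF assms])
  also have "\<dots> = inner (\<Sum>b\<in>Basis. \<phi> b *\<^sub>R b) y" unfolding inner_sum_left
    by (rule sum.cong) (simp_all add: inner_commute)
  finally show ?thesis unfolding rz_def B_Ginv by simp
qed

definition adj :: "('a \<Rightarrow> 'a) \<Rightarrow> 'a \<Rightarrow> 'a" where "adj A x = rz (\<lambda>y. B x (A y))"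

lemma B_adj: assumes "linear A" shows "B (adj A x) y = B x (A y)"
  unfolding adj_def
  by (rule B_rz) (rule linear_compose[OF assms Blin1, unfolded o_def])

lemma B_adj2: assumes "linear A" shows "B y (adj A x) = B (A y) x"
  using B_adj[OF assms] Bsym by metis

lemma adj_lin: assumes "linear A" shows "linear (adj A)"
proof (rule linearI)
  fix x y :: 'a and c :: real
  show "adj A (x + y) = adj A x + adj A y"
    by (rule B_ext) (simp add: B_adj[OF assms] bilinear_ladd[OF Bbl])
  show "adj A (c *\<^sub>R x) = c *\<^sub>R adj A x"
    by (rule B_ext) (simp add: B_adj[OF assms] bilinear_lmul[OF Bbl])
qed

lemma adj_comp: assumes "linear X" "linear Y"
  shows "adj (\<lambda>w. Y (X w)) a = adj X (adj Y a)"
proof -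
  have l: "linear (\<lambda>w. Y (X w))" using linear_compose[OF assms] by (simp add: o_def)
  show ?thesis by (rule B_ext) (simp add: B_adj[OF l] B_adj assms)
qed

lemma adj_adj: assumes "linear X" shows "adj (adj X) a = X a"
proof (rule B_ext)
  fix z
  have "B (adj (adj X) a) z = B a (adj X z)" by (simp add: B_adj assms adj_lin)
  also have "\<dots> = B (X a) z" by (rule B_adj2[OF assms])
  finally show "B (adj (adj X) a) z = B (X a) z" .
qed

end

context plie begin

definition J where "J u x = adj (br x) u"

lemma B_J: "B (J u x) y = B u (br x y)" by (simp add: J_def B_adj brlin1)

lemma J_lin: "linear (J u)"
proof (rule linearI)
  fix x y :: 'a and c :: real
  show "J u (x + y) = J u x + J u y"
    by (rule B_ext) (simp add: B_J Bs brs)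
  show "J u (c *\<^sub>R x) = c *\<^sub>R J u x"
    by (rule B_ext) (simp add: B_J Bs brs)
qed

lemma adjbr_lin: "linear (adj (br u))" by (rule adj_lin[OF brlin1])

lemma J_skew: "adj (J u) x = - J u x"
proof (rule B_ext)
  fix z
  have "B (adj (J u) x) z = B x (J u z)" by (simp add: B_adj J_lin)
  also have "\<dots> = B u (br z x)" by (metis B_J Bsym)
  also have "\<dots> = B (- J u x) z" by (simp add: B_J Bs anti[of z x])
  finally show "B (adj (J u) x) z = B (- J u x) z" .
qed

lemma tr_add: "ltrace (\<lambda>w. f w + g w) = ltrace f + ltrace g"
  by (simp add: ltrace_def inner_add_left sum.distrib)
lemma tr_diff: "ltrace (\<lambda>w. f w - g w) = ltrace f - ltrace g"
  by (simp add: ltrace_def inner_diff_left sum_subtractf)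
lemma tr_scale: "ltrace (\<lambda>w. c *\<^sub>R f w) = c * ltrace f"
  by (simp add: ltrace_def sum_distrib_left)
lemma tr_neg: "ltrace (\<lambda>w. - f w) = - ltrace f"
  by (simp add: ltrace_def sum_negf)

lemma trc: fixes X Y :: "'a \<Rightarrow> 'a" assumes "linear X"
  shows "ltrace (\<lambda>w. X (Y w)) = (\<Sum>b\<in>Basis. \<Sum>c\<in>Basis. inner (Y b) c * inner (X c) b)"
  unfolding ltrace_def
proof (rule sum.cong[OF refl])
  fix b :: 'a
  have "X (Y b) = X (\<Sum>c\<in>Basis. inner (Y b) c *\<^sub>R c)" by (simp add: euclidean_representation)
  also have "\<dots> = (\<Sum>c\<in>Basis. inner (Y b) c *\<^sub>R X c)"
    by (simp add: linear_sum[OF assms] linear_scale[OF assms])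
  finally show "inner (X (Y b)) b = (\<Sum>c\<in>Basis. inner (Y b) c * inner (X c) b)"
    by (simp add: inner_sum_left)
qed

lemma tr_comm: fixes X Y :: "'a \<Rightarrow> 'a" assumes "linear X" "linear Y"
  shows "ltrace (\<lambda>w. X (Y w)) = ltrace (\<lambda>w. Y (X w))"
  unfolding trc[OF assms(1)] trc[OF assms(2)]
  by (subst sum.swap) (simp add: mult.commute)

lemma tr_adj: assumes "linear X" shows "ltrace (adj X) = ltrace X"
proof -
  have l1: "linear (\<lambda>w. X (fd w))" using linear_compose[OF Ginv_lin assms] by (simp add: o_def)
  have "ltrace (adj X) = (\<Sum>b\<in>Basis. B (adj X b) (fd b))" by (rule ltrace_dual)
  also have "\<dots> = (\<Sum>b\<in>Basis. inner (Gop (X (fd b))) b)"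
    by (rule sum.cong[OF refl]) (metis B_adj[OF assms] inner_Gop Bsym)
  also have "\<dots> = ltrace (\<lambda>w. Gop (X (fd w)))" by (simp add: ltrace_def)
  also have "\<dots> = ltrace (\<lambda>w. X (fd (Gop w)))" by (rule tr_comm[OF Gop_lin l1])
  also have "\<dots> = ltrace X" using Ginv by simp
  finally show ?thesis .
qed

lemma tr_adjcomp: assumes "linear X" "linear Y"
  shows "ltrace (\<lambda>w. adj X (adj Y w)) = ltrace (\<lambda>w. Y (X w))"
proof -
  have l: "linear (\<lambda>w. Y (X w))" using linear_compose[OF assms] by (simp add: o_def)
  have "(\<lambda>w. adj X (adj Y w)) = adj (\<lambda>w. Y (X w))" by (rule ext) (simp add: adj_comp assms)
  then show ?thesis using tr_adj[OF l] by simp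
qed

lemma tr_J: "ltrace (J u) = 0"
proof -
  have "ltrace (J u) = ltrace (adj (J u))" by (simp add: tr_adj J_lin)
  also have "\<dots> = ltrace (\<lambda>x. - J u x)"
  proof -
    have "adj (J u) = (\<lambda>x. - J u x)" by (rule ext) (rule J_skew)
    then show ?thesis by simp
  qed
  also have "\<dots> = - ltrace (J u)" by (rule tr_neg)
  finally show ?thesis by simp
qed

lemma L_eq: "levi_civita br B u v = (1/2) *\<^sub>R (br u v - adj (br u) v - J u v)"
  unfolding levi_civita_def
proof (rule the_equality)
  have e: "\<And>w. B (br u v - adj (br u) v - J u v) w = B (br u v) w + B (br w u) v + B (br w v) u"
  proof -
    fix w
    have "B (br w u) v = - B v (br u w)" by (metis anti Bsym bilinear_lneg[OF Bbl])
    moreover have "B (br w v) u = - B u (br v w)" by (metis anti Bsym bilinear_lneg[OF Bbl])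
    ultimately show "?thesis w" by (simp add: Bs B_adj brlin1 B_J)
  qed
  show "\<forall>w. 2 * B ((1/2) *\<^sub>R (br u v - adj (br u) v - J u v)) w = B (br u v) w + B (br w u) v + B (br w v) u"
    by (simp add: bilinear_lmul[OF Bbl] e)
  fix x assume h: "\<forall>w. 2 * B x w = B (br u v) w + B (br w u) v + B (br w v) u"
  show "x = (1/2) *\<^sub>R (br u v - adj (br u) v - J u v)"
    by (rule B_ext) (simp add: bilinear_lmul[OF Bbl] e h[rule_format, symmetric])
qed

lemma Lswap: "levi_civita br B w x = (1/2) *\<^sub>R (- br x w - J x w - adj (br x) w)"
  by (simp add: L_eq J_def anti[of x w])

end

context plie begin

lemma e2: "levi_civita br B u (levi_civita br B w v) = (1/4) *\<^sub>R (- br u (br v w) - br u (J v w) - br u (adj (br v) w)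
   + adj (br u) (br v w) + adj (br u) (J v w) + adj (br u) (adj (br v) w)
   + J u (br v w) + J u (J v w) + J u (adj (br v) w))"
  unfolding Lswap[of w v] L_eq[of u]
  by (simp add: brs linear_add[OF adjbr_lin] linear_diff[OF adjbr_lin] linear_neg[OF adjbr_lin] linear_scale[OF adjbr_lin]
     linear_add[OF J_lin] linear_diff[OF J_lin] linear_neg[OF J_lin] linear_scale[OF J_lin] algebra_simps)

lemma t12: "ltrace (\<lambda>w. br u (J v w)) = ltrace (\<lambda>w. J v (br u w))"
  by (rule tr_comm[OF brlin1 J_lin])
lemma t13: "ltrace (\<lambda>w. br u (adj (br v) w)) = ltrace (\<lambda>w. adj (br v) (br u w))"
  by (rule tr_comm[OF brlin1 adjbr_lin])
lemma t21: "ltrace (\<lambda>w. adj (br u) (br v w)) = ltrace (\<lambda>w. adj (br v) (br u w))"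
proof -
  have "ltrace (\<lambda>w. adj (br u) (br v w)) = ltrace (\<lambda>w. adj (br u) (adj (adj (br v)) w))"
    by (simp add: adj_adj brlin1)
  also have "\<dots> = ltrace (\<lambda>w. adj (br v) (br u w))" by (rule tr_adjcomp[OF brlin1 adjbr_lin])
  finally show ?thesis .
qed
lemma t22: "ltrace (\<lambda>w. adj (br u) (J v w)) = - ltrace (\<lambda>w. J v (br u w))"
proof -
  have "ltrace (\<lambda>w. adj (br u) (J v w)) = ltrace (\<lambda>w. adj (br u) (adj (adj (J v)) w))"
    by (simp add: adj_adj J_lin)
  also have "\<dots> = ltrace (\<lambda>w. adj (J v) (br u w))" by (rule tr_adjcomp[OF brlin1 adj_lin[OF J_lin]])
  also have "\<dots> = ltrace (\<lambda>w. - J v (br u w))" by (simp add: J_skew)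
  finally show ?thesis by (simp add: tr_neg)
qed
lemma t23: "ltrace (\<lambda>w. adj (br u) (adj (br v) w)) = ltrace (\<lambda>w. br u (br v w))"
  by (simp add: tr_adjcomp brlin1 tr_comm[OF brlin1 brlin1])
lemma t33: "ltrace (\<lambda>w. J u (adj (br v) w)) = - ltrace (\<lambda>w. J u (br v w))"
proof -
  have "ltrace (\<lambda>w. J u (adj (br v) w)) = ltrace (\<lambda>w. adj (br v) (J u w))"
    by (rule tr_comm[OF J_lin adjbr_lin])
  also have "\<dots> = - ltrace (\<lambda>w. J u (br v w))" by (rule t22)
  finally show ?thesis .
qed

lemma ricci_formula:
  assumes um: "\<And>u. ltrace (br u) = 0"
  shows "ricci br B u v = - (1/2) * ltrace (\<lambda>w. br u (br v w))
     - (1/2) * ltrace (\<lambda>w. adj (br v) (br u w)) - (1/4) * ltrace (\<lambda>w. J u (J v w))"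
proof -
  have e1: "\<And>w. levi_civita br B (br u w) v = (1/2) *\<^sub>R (- br v (br u w) - J v (br u w) - adj (br v) (br u w))"
    by (rule Lswap)
  have e3: "\<And>w. levi_civita br B w (levi_civita br B u v) = (1/2) *\<^sub>R (- br (levi_civita br B u v) w
       - J (levi_civita br B u v) w - adj (br (levi_civita br B u v)) w)"
    by (rule Lswap)
  have z1: "ltrace (adj (br x)) = 0" for x by (simp add: tr_adj brlin1 um)
  have "ricci br B u v = ltrace (\<lambda>w. (1/2) *\<^sub>R (- br v (br u w) - J v (br u w) - adj (br v) (br u w))
     - (levi_civita br B u (levi_civita br B w v) - (1/2) *\<^sub>R (- br (levi_civita br B u v) w
       - J (levi_civita br B u v) w - adj (br (levi_civita br B u v)) w)))"
    unfolding ricci_def curvature_def e1 e3 ..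
  also have "\<dots> = (1/2) * (- ltrace (\<lambda>w. br v (br u w)) - ltrace (\<lambda>w. J v (br u w)) - ltrace (\<lambda>w. adj (br v) (br u w)))
     - (1/4) * (- ltrace (\<lambda>w. br u (br v w)) - ltrace (\<lambda>w. br u (J v w)) - ltrace (\<lambda>w. br u (adj (br v) w))
   + ltrace (\<lambda>w. adj (br u) (br v w)) + ltrace (\<lambda>w. adj (br u) (J v w)) + ltrace (\<lambda>w. adj (br u) (adj (br v) w))
   + ltrace (\<lambda>w. J u (br v w)) + ltrace (\<lambda>w. J u (J v w)) + ltrace (\<lambda>w. J u (adj (br v) w)))"
    unfolding e2 by (simp add: tr_add tr_diff tr_scale tr_neg tr_J z1 um)
  also have "\<dots> = - (1/2) * ltrace (\<lambda>w. br u (br v w))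
     - (1/2) * ltrace (\<lambda>w. adj (br v) (br u w)) - (1/4) * ltrace (\<lambda>w. J u (J v w))"
    unfolding t12[of u v] t13[of u v] t21[of u v] t22[of u v] t23[of u v] t33[of u v] tr_comm[OF brlin1 brlin1, of v u] by (simp add: field_simps)
  finally show ?thesis .
qed

end

context plie begin

lemma adjbr_add: "adj (br (x + y)) z = adj (br x) z + adj (br y) z"
  by (rule B_ext) (simp add: B_adj brlin1 Bs brs)
lemma adjbr_scale: "adj (br (c *\<^sub>R x)) z = c *\<^sub>R adj (br x) z"
  by (rule B_ext) (simp add: B_adj brlin1 Bs brs)
lemma J_add1: "J (x + y) w = J x w + J y w"
  by (rule B_ext) (simp add: B_J Bs)
lemma J_scale1: "J (c *\<^sub>R x) w = c *\<^sub>R J x w"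
  by (rule B_ext) (simp add: B_J Bs)

lemma ricci_lin:
  assumes um: "\<And>u. ltrace (br u) = 0"
  shows "linear (ricci br B u)"
proof (rule linearI)
  fix x y :: 'a and c :: real
  show "ricci br B u (x + y) = ricci br B u x + ricci br B u y"
    unfolding ricci_formula[OF um]
    by (simp add: brs adjbr_add J_add1 linear_add[OF J_lin] tr_add field_simps)
  show "ricci br B u (c *\<^sub>R x) = c *\<^sub>R ricci br B u x"
    unfolding ricci_formula[OF um]
    by (simp add: brs adjbr_scale J_scale1 linear_scale[OF J_lin] tr_scale field_simps)
qed

lemma B_ricci_op:
  assumes um: "\<And>u. ltrace (br u) = 0"
  shows "B (ricci_op br B u) v = ricci br B u v"
proof -
  have "ricci_op br B u = rz (ricci br B u)"
    unfolding ricci_op_def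
  proof (rule the_equality)
    show "\<forall>v. B (rz (ricci br B u)) v = ricci br B u v" by (simp add: B_rz ricci_lin um)
    fix x assume "\<forall>v. B x v = ricci br B u v"
    then show "x = rz (ricci br B u)" by (intro B_ext) (simp add: B_rz ricci_lin um)
  qed
  then show ?thesis by (simp add: B_rz ricci_lin um)
qed

lemma dual_swap:
  fixes \<beta> :: "'a \<Rightarrow> 'a \<Rightarrow> real"
  assumes bb: "bilinear \<beta>"
  shows "(\<Sum>b\<in>Basis. \<beta> b (fd b)) = (\<Sum>b\<in>Basis. \<beta> (fd b) b)"
proof -
  have r1: "linear (\<beta> x)" for x using bb by (simp add: bilinear_def)
  have r2: "linear (\<lambda>x. \<beta> x y)" for y using bb by (simp add: bilinear_def)
  have l: "\<beta> b (fd b) = (\<Sum>k\<in>Basis. B (fd b) (fd k) * \<beta> b k)" for b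
  proof -
    have "\<beta> b (fd b) = \<beta> b (\<Sum>k\<in>Basis. B (fd b) (fd k) *\<^sub>R k)" by (simp add: expand)
    then show ?thesis by (simp add: linear_sum[OF r1] linear_scale[OF r1])
  qed
  have r: "\<beta> (fd b) b = (\<Sum>k\<in>Basis. B (fd b) (fd k) * \<beta> k b)" for b
  proof -
    have "\<beta> (fd b) b = \<beta> (\<Sum>k\<in>Basis. B (fd b) (fd k) *\<^sub>R k) b" by (simp add: expand)
    then show ?thesis by (simp add: linear_sum[OF r2] linear_scale[OF r2])
  qed
  have "(\<Sum>b\<in>Basis. \<beta> (fd b) b) = (\<Sum>b\<in>Basis. \<Sum>k\<in>Basis. B (fd b) (fd k) * \<beta> k b)"
    by (simp add: r)
  also have "\<dots> = (\<Sum>k\<in>Basis. \<Sum>b\<in>Basis. B (fd b) (fd k) * \<beta> k b)" by (rule sum.swap)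
  also have "\<dots> = (\<Sum>k\<in>Basis. \<Sum>b\<in>Basis. B (fd k) (fd b) * \<beta> k b)" by (simp add: Bsym)
  also have "\<dots> = (\<Sum>b\<in>Basis. \<beta> b (fd b))" by (simp add: l)
  finally show ?thesis by simp
qed

end

locale plied = plie +
  fixes D :: "'a \<Rightarrow> 'a"
  assumes um: "\<And>u. ltrace (br u) = 0"
    and Dl: "linear D" and Dd: "\<And>x y. D (br x y) = br (D x) y + br x (D y)"
begin

lemmas Ds = linear_add[OF Dl] linear_scale[OF Dl] linear_diff[OF Dl] linear_neg[OF Dl] linear_sum[OF Dl]

lemma contract: "(\<Sum>b\<in>Basis. B (fd b) X * B (D b) Y) = B (D X) Y"
proof -
  have "D X = D (\<Sum>b\<in>Basis. B X (fd b) *\<^sub>R b)" by (simp add: expand)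
  also have "\<dots> = (\<Sum>b\<in>Basis. B X (fd b) *\<^sub>R D b)" by (simp add: Ds)
  finally have "B (D X) Y = (\<Sum>b\<in>Basis. B X (fd b) * B (D b) Y)" by (simp add: Bs)
  then show ?thesis by (simp add: Bsym[of X])
qed

definition Q where "Q = (\<Sum>b\<in>Basis. \<Sum>c\<in>Basis. B (br (D b) c) (br (fd b) (fd c)))"

lemma PQ: "(\<Sum>b\<in>Basis. ltrace (\<lambda>w. adj (br (fd b)) (br (D b) w))) = Q"
  unfolding Q_def by (simp add: ltrace_dual B_adj brlin1)

lemma jjf: "ltrace (\<lambda>w. J u (J v w)) = (\<Sum>c\<in>Basis. \<Sum>k\<in>Basis. B v (br c (fd k)) * B u (br k (fd c)))"
  unfolding ltrace_dual
proof (rule sum.cong[OF refl])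
  fix c :: 'a
  have "J v c = (\<Sum>k\<in>Basis. B (J v c) (fd k) *\<^sub>R k)" by (simp add: expand)
  also have "\<dots> = (\<Sum>k\<in>Basis. B v (br c (fd k)) *\<^sub>R k)" by (simp add: B_J)
  finally have "B u (br (J v c) (fd c)) = (\<Sum>k\<in>Basis. B v (br c (fd k)) * B u (br k (fd c)))"
    by (simp add: brs Bs)
  then show "B (J u (J v c)) (fd c) = (\<Sum>k\<in>Basis. B v (br c (fd k)) * B u (br k (fd c)))"
    by (simp add: B_J)
qed

lemma C1: "(\<Sum>c\<in>Basis. \<Sum>k\<in>Basis. B (br (D c) (fd k)) (br k (fd c))) = - Q"
proof -
  have "(\<Sum>k\<in>Basis. B (br (D c) (fd k)) (br k (fd c))) = (\<Sum>k\<in>Basis. B (br (D c) k) (br (fd k) (fd c)))" for c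
    by (rule dual_swap[of "\<lambda>x y. B (br (D c) y) (br x (fd c))", simplified])
       (auto simp: bilinear_def brs Bs intro!: linearI)
  also have "\<dots> c = - (\<Sum>k\<in>Basis. B (br (D c) k) (br (fd c) (fd k)))" for c
    by (simp add: anti[of "fd k" "fd c" for k] Bs sum_negf)
  finally show ?thesis unfolding Q_def by (simp add: sum_negf)
qed

lemma C2: "(\<Sum>c\<in>Basis. \<Sum>k\<in>Basis. B (br c (D (fd k))) (br k (fd c))) = - Q"
proof -
  have "(\<Sum>k\<in>Basis. B (br c (D (fd k))) (br k (fd c))) = (\<Sum>k\<in>Basis. B (br c (D k)) (br (fd k) (fd c)))" for c
    by (rule dual_swap[of "\<lambda>x y. B (br c (D y)) (br x (fd c))", simplified])
       (auto simp: bilinear_def brs Bs Ds intro!: linearI)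
  then have "(\<Sum>c\<in>Basis. \<Sum>k\<in>Basis. B (br c (D (fd k))) (br k (fd c)))
     = (\<Sum>c\<in>Basis. \<Sum>k\<in>Basis. B (br c (D k)) (br (fd k) (fd c)))" by simp
  also have "\<dots> = (\<Sum>k\<in>Basis. \<Sum>c\<in>Basis. B (br c (D k)) (br (fd k) (fd c)))" by (rule sum.swap)
  also have "\<dots> = (\<Sum>k\<in>Basis. \<Sum>c\<in>Basis. B (br (fd c) (D k)) (br (fd k) c))"
  proof (rule sum.cong[OF refl])
    fix k :: 'a
    show "(\<Sum>c\<in>Basis. B (br c (D k)) (br (fd k) (fd c))) = (\<Sum>c\<in>Basis. B (br (fd c) (D k)) (br (fd k) c))"
      by (rule dual_swap[of "\<lambda>x y. B (br x (D k)) (br (fd k) y)", simplified])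
         (auto simp: bilinear_def brs Bs intro!: linearI)
  qed
  also have "\<dots> = (\<Sum>k\<in>Basis. \<Sum>c\<in>Basis. B (br (D k) (fd c)) (br c (fd k)))"
    by (simp add: anti[of "fd c" "D k" for c k] anti[of "fd k" c for c k] Bs)
  also have "\<dots> = - Q" by (rule C1)
  finally show ?thesis .
qed

lemma JJ: "(\<Sum>b\<in>Basis. ltrace (\<lambda>w. J (D b) (J (fd b) w))) = - 2 * Q"
proof -
  have "(\<Sum>b\<in>Basis. ltrace (\<lambda>w. J (D b) (J (fd b) w)))
     = (\<Sum>b\<in>Basis. \<Sum>c\<in>Basis. \<Sum>k\<in>Basis. B (fd b) (br c (fd k)) * B (D b) (br k (fd c)))"
    by (simp add: jjf)
  also have "\<dots> = (\<Sum>c\<in>Basis. \<Sum>b\<in>Basis. \<Sum>k\<in>Basis. B (fd b) (br c (fd k)) * B (D b) (br k (fd c)))"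
    by (rule sum.swap)
  also have "\<dots> = (\<Sum>c\<in>Basis. \<Sum>k\<in>Basis. \<Sum>b\<in>Basis. B (fd b) (br c (fd k)) * B (D b) (br k (fd c)))"
    by (rule sum.cong[OF refl]) (rule sum.swap)
  also have "\<dots> = (\<Sum>c\<in>Basis. \<Sum>k\<in>Basis. B (D (br c (fd k))) (br k (fd c)))"
    by (simp add: contract)
  also have "\<dots> = (\<Sum>c\<in>Basis. \<Sum>k\<in>Basis. B (br (D c) (fd k)) (br k (fd c)))
       + (\<Sum>c\<in>Basis. \<Sum>k\<in>Basis. B (br c (D (fd k))) (br k (fd c)))"
    by (simp add: Dd Bs sum.distrib)
  also have "\<dots> = - 2 * Q" by (simp add: C1 C2)
  finally show ?thesis .
qed

lemma KA: "(\<Sum>b\<in>Basis. ltrace (\<lambda>w. br (D b) (br (fd b) w))) = 0"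
proof -
  have dr: "br (D x) y = D (br x y) - br x (D y)" for x y by (simp add: Dd)
  have "(\<Sum>b\<in>Basis. ltrace (\<lambda>w. br (D b) (br (fd b) w)))
     = (\<Sum>b\<in>Basis. ltrace (\<lambda>w. D (br b (br (fd b) w)))) - (\<Sum>b\<in>Basis. ltrace (\<lambda>w. br b (D (br (fd b) w))))"
    by (simp add: dr tr_diff sum_subtractf)
  also have "(\<Sum>b\<in>Basis. ltrace (\<lambda>w. br b (D (br (fd b) w)))) = (\<Sum>b\<in>Basis. ltrace (\<lambda>w. br (fd b) (D (br b w))))"
    by (rule dual_swap[of "\<lambda>x y. ltrace (\<lambda>w. br x (D (br y w)))", simplified])
       (auto simp: bilinear_def brs Ds tr_add tr_scale intro!: linearI)
  also have "\<dots> = (\<Sum>b\<in>Basis. ltrace (\<lambda>w. D (br b (br (fd b) w))))"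
  proof (rule sum.cong[OF refl])
    fix b :: 'a
    have l: "linear (\<lambda>w. D (br b w))" using linear_compose[OF brlin1 Dl] by (simp add: o_def)
    show "ltrace (\<lambda>w. br (fd b) (D (br b w))) = ltrace (\<lambda>w. D (br b (br (fd b) w)))"
      by (rule tr_comm[OF brlin1 l])
  qed
  finally show ?thesis by simp
qed

lemma trRD: "(\<Sum>b\<in>Basis. ricci br B (D b) (fd b)) = 0"
proof -
  have "(\<Sum>b\<in>Basis. ricci br B (D b) (fd b)) =
     - (1/2) * (\<Sum>b\<in>Basis. ltrace (\<lambda>w. br (D b) (br (fd b) w)))
     - (1/2) * (\<Sum>b\<in>Basis. ltrace (\<lambda>w. adj (br (fd b)) (br (D b) w)))
     - (1/4) * (\<Sum>b\<in>Basis. ltrace (\<lambda>w. J (D b) (J (fd b) w)))"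
    by (simp add: ricci_formula[OF um] sum_subtractf sum_distrib_left sum_negf)
  also have "\<dots> = 0" by (simp add: KA PQ JJ)
  finally show ?thesis .
qed

end

theorem proposition3p2:
  fixes br :: "'a::euclidean_space \<Rightarrow> 'a \<Rightarrow> 'a"
    and B :: "'a \<Rightarrow> 'a \<Rightarrow> real"
  assumes "lie_algebra br"
    and "pseudo_metric B"
    and "unimodular br"
    and "\<exists>D. lie_derivation br D \<and> ltrace D \<noteq> 0"
  shows "einstein br B \<longleftrightarrow> ricci_flat br B"
proof -
  from assms(1) have bl: "bilinear br" and alt: "\<And>x. br x x = 0"
    by (auto simp: lie_algebra_def)
  from assms(2) have Bbl: "bilinear B" and Bsym: "\<And>x y. B x y = B y x"
    and Bnd: "\<And>x. (\<forall>y. B x y = 0) \<Longrightarrow> x = 0"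
    by (auto simp: pseudo_metric_def)
  from assms(4) obtain D where Dl: "linear D" and Dd: "\<And>x y. D (br x y) = br (D x) y + br x (D y)"
    and trD: "ltrace D \<noteq> 0"
    by (auto simp: lie_derivation_def)
  have um: "\<And>u. ltrace (br u) = 0" using assms(3) by (simp add: unimodular_def)
  interpret plied br B D
    by unfold_locales (auto simp: bl alt Bbl Bsym Bnd um Dl Dd linear_add[OF Dl] linear_scale[OF Dl])
  show ?thesis
  proof
    assume "einstein br B"
    then obtain c where hc: "ricci_op br B = (\<lambda>u. c *\<^sub>R u)" by (auto simp: einstein_def)
    have "(\<Sum>b\<in>Basis. ricci br B (D b) (Ginv b)) = (\<Sum>b\<in>Basis. c * B (D b) (Ginv b))"
    proof (rule sum.cong[OF refl])
      fix b :: 'a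
      have "ricci br B (D b) (Ginv b) = B (ricci_op br B (D b)) (Ginv b)"
        by (simp add: B_ricci_op[OF um])
      also have "\<dots> = c * B (D b) (Ginv b)" by (simp add: hc Bs)
      finally show "ricci br B (D b) (Ginv b) = c * B (D b) (Ginv b)" .
    qed
    also have "\<dots> = c * ltrace D" by (simp add: ltrace_dual sum_distrib_left)
    finally have "c * ltrace D = 0" using trRD by simp
    then have "c = 0" using trD by simp
    then show "ricci_flat br B" by (simp add: ricci_flat_def hc)
  next
    assume "ricci_flat br B"
    then show "einstein br B" unfolding einstein_def ricci_flat_def
      by (intro exI[of _ 0]) (simp add: fun_eq_iff)
  qed
qed

end
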